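(* Let $\Gamma$ be a finite group acting linearly on a finite-dimensional complex vector space $V$, consider the cotangent lifted action on $T^*V=V\times V^*$, let $R=\mathbb C[T^*V]$, let $\pi:\operatorname{Der}(R)^\Gamma\to\operatorname{Der}(R^\Gamma)$ be the restriction map $X\mapsto X|_{R^\Gamma}$, and let $\lambda:\operatorname{Der}(R^\Gamma)\to\operatorname{Der}(R)^\Gamma$ be an $R^\Gamma$-linear map with $\pi\lambda=\operatorname{id}_{\operatorname{Der}(R^\Gamma)}$. Then $\omega(X,Y):=\omega_0(\lambda(X),\lambda(Y))$, for $X,Y\in\operatorname{Der}(R^\Gamma)$, defines a non-degenerate closed form $\omega\in\operatorname{Alt}^2_{R^\Gamma}(\operatorname{Der}(R^\Gamma),R^\Gamma)$.
   Context: $\omega_0=\sum_i\mathrm dq^i\wedge\mathrm dp_i$ is the canonical symplectic form on $T^*V$, evaluated on derivations of $R$. $\Gamma$ acts on derivations by $X\mapsto(\gamma^{-1})^*X\gamma^*$; $\operatorname{Der}(R)^\Gamma$ denotes invariant derivations. (It is known that $\pi$ is surjective, so such a section $\lambda$ exists.) Closedness is with respect to the naive de Rham differential of the Lie-Rinehart algebra $(\operatorname{Der}(R^\Gamma),R^\Gamma)$: $(\mathrm d\omega)(X_0,X_1,X_2)=\sum_i(-1)^iX_i(\omega(\dots\widehat{X_i}\dots))+\sum_{i<j}(-1)^{i+j}\omega([X_i,X_j],\dots\widehat{X_i}\dots\widehat{X_j}\dots)$. Non-degenerate means $\omega(X,Y)=0$ for all $Y$ implies $X=0$. *)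

theory Defs
  imports "HOL-Analysis.Analysis" "HOL-Algebra.Group"
begin

text \<open>Points of the cotangent space T*V = V x V*, with V = complex^'n and V* identified
with complex^'n via the dual basis: a point is (q, p).\<close>
type_synonym 'n pt = "(complex^'n) \<times> (complex^'n)"

text \<open>R = C[T*V], realised as the ring of polynomial functions on T*V
(faithful since C is infinite).\<close>
inductive_set polyfun :: "('n::finite pt \<Rightarrow> complex) set" where
  const: "(\<lambda>_. c) \<in> polyfun"
| qcoord: "(\<lambda>x. fst x $ i) \<in> polyfun"
| pcoord: "(\<lambda>x. snd x $ i) \<in> polyfun"
| add: "f \<in> polyfun \<Longrightarrow> g \<in> polyfun \<Longrightarrow> (\<lambda>x. f x + g x) \<in> polyfun"
| mult: "f \<in> polyfun \<Longrightarrow> g \<in> polyfun \<Longrightarrow> (\<lambda>x. f x * g x) \<in> polyfun"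

definition cot_act :: "complex^'n^'n \<Rightarrow> 'n::finite pt \<Rightarrow> 'n pt" where
  "cot_act A x = (A *v fst x, transpose (matrix_inv A) *v snd x)"

definition invariants :: "('g, 'b) monoid_scheme \<Rightarrow> ('g \<Rightarrow> complex^'n^'n) \<Rightarrow> ('n::finite pt \<Rightarrow> complex) set" where
  "invariants G \<rho> = {f \<in> polyfun. \<forall>g\<in>carrier G. f \<circ> cot_act (\<rho> g) = f}"

text \<open>C-derivations of a subalgebra S of functions; a derivation is represented as an
operator on functions that is zero outside S (so equality of derivations is equality on S).\<close>
definition derivs :: "('a \<Rightarrow> complex) set \<Rightarrow> (('a \<Rightarrow> complex) \<Rightarrow> ('a \<Rightarrow> complex)) set" where
  "derivs S = {D.
     (\<forall>f\<in>S. D f \<in> S) \<and>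
     (\<forall>f\<in>S. \<forall>g\<in>S. D (\<lambda>x. f x + g x) = (\<lambda>x. D f x + D g x)) \<and>
     (\<forall>c. \<forall>f\<in>S. D (\<lambda>x. c * f x) = (\<lambda>x. c * D f x)) \<and>
     (\<forall>f\<in>S. \<forall>g\<in>S. D (\<lambda>x. f x * g x) = (\<lambda>x. f x * D g x + D f x * g x)) \<and>
     (\<forall>f. f \<notin> S \<longrightarrow> D f = (\<lambda>x. 0))}"

definition inv_derivs :: "('g, 'b) monoid_scheme \<Rightarrow> ('g \<Rightarrow> complex^'n^'n)
     \<Rightarrow> ((('n::finite) pt \<Rightarrow> complex) \<Rightarrow> ('n pt \<Rightarrow> complex)) set" where
  "inv_derivs G \<rho> = {D \<in> derivs polyfun.
     \<forall>g\<in>carrier G. \<forall>f\<in>polyfun. D (f \<circ> cot_act (\<rho> g)) = D f \<circ> cot_act (\<rho> g)}"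

definition omega0 :: "(('n::finite pt \<Rightarrow> complex) \<Rightarrow> ('n pt \<Rightarrow> complex))
     \<Rightarrow> (('n pt \<Rightarrow> complex) \<Rightarrow> ('n pt \<Rightarrow> complex)) \<Rightarrow> ('n pt \<Rightarrow> complex)" where
  "omega0 X Y = (\<lambda>x. \<Sum>i\<in>UNIV.
      X (\<lambda>y. fst y $ i) x * Y (\<lambda>y. snd y $ i) x - X (\<lambda>y. snd y $ i) x * Y (\<lambda>y. fst y $ i) x)"

definition der_add :: "(('a \<Rightarrow> complex) \<Rightarrow> ('a \<Rightarrow> complex)) \<Rightarrow> (('a \<Rightarrow> complex) \<Rightarrow> ('a \<Rightarrow> complex))
     \<Rightarrow> (('a \<Rightarrow> complex) \<Rightarrow> ('a \<Rightarrow> complex))" where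
  "der_add X Y = (\<lambda>f x. X f x + Y f x)"

definition der_smult :: "('a \<Rightarrow> complex) \<Rightarrow> (('a \<Rightarrow> complex) \<Rightarrow> ('a \<Rightarrow> complex))
     \<Rightarrow> (('a \<Rightarrow> complex) \<Rightarrow> ('a \<Rightarrow> complex))" where
  "der_smult a X = (\<lambda>f x. a x * X f x)"

definition der_bracket :: "(('a \<Rightarrow> complex) \<Rightarrow> ('a \<Rightarrow> complex)) \<Rightarrow> (('a \<Rightarrow> complex) \<Rightarrow> ('a \<Rightarrow> complex))
     \<Rightarrow> (('a \<Rightarrow> complex) \<Rightarrow> ('a \<Rightarrow> complex))" where
  "der_bracket X Y = (\<lambda>f x. X (Y f) x - Y (X f) x)"

definition d2 :: "((('a \<Rightarrow> complex) \<Rightarrow> ('a \<Rightarrow> complex)) \<Rightarrow> (('a \<Rightarrow> complex) \<Rightarrow> ('a \<Rightarrow> complex)) \<Rightarrow> ('a \<Rightarrow> complex))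
   \<Rightarrow> (('a \<Rightarrow> complex) \<Rightarrow> ('a \<Rightarrow> complex)) \<Rightarrow> (('a \<Rightarrow> complex) \<Rightarrow> ('a \<Rightarrow> complex))
   \<Rightarrow> (('a \<Rightarrow> complex) \<Rightarrow> ('a \<Rightarrow> complex)) \<Rightarrow> ('a \<Rightarrow> complex)" where
  "d2 w X0 X1 X2 = (\<lambda>x.
       X0 (w X1 X2) x - X1 (w X0 X2) x + X2 (w X0 X1) x
     - w (der_bracket X0 X1) X2 x + w (der_bracket X0 X2) X1 x - w (der_bracket X1 X2) X0 x)"

end

theory Submission
  imports Defs
begin


section \<open>Polynomial functions\<close>

abbreviation qc :: "'n::finite \<Rightarrow> 'n pt \<Rightarrow> complex" where "qc i \<equiv> (\<lambda>y. fst y $ i)"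
abbreviation pc :: "'n::finite \<Rightarrow> 'n pt \<Rightarrow> complex" where "pc i \<equiv> (\<lambda>y. snd y $ i)"

lemma pf_const[intro,simp]: "(\<lambda>_. c) \<in> polyfun" by (rule polyfun.const)
lemma pf_q[intro,simp]: "(\<lambda>x. fst x $ i) \<in> polyfun" by (rule polyfun.qcoord)
lemma pf_p[intro,simp]: "(\<lambda>x. snd x $ i) \<in> polyfun" by (rule polyfun.pcoord)
lemma pf_add[intro]: "f \<in> polyfun \<Longrightarrow> g \<in> polyfun \<Longrightarrow> (\<lambda>x. f x + g x) \<in> polyfun"
  by (rule polyfun.add)
lemma pf_mult[intro]: "f \<in> polyfun \<Longrightarrow> g \<in> polyfun \<Longrightarrow> (\<lambda>x. f x * g x) \<in> polyfun"
  by (rule polyfun.mult)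
lemma pf_cmul[intro]: "f \<in> polyfun \<Longrightarrow> (\<lambda>x. c * f x) \<in> polyfun"
  using pf_mult[OF pf_const[of c]] by blast
lemma pf_diff[intro]: "f \<in> polyfun \<Longrightarrow> g \<in> polyfun \<Longrightarrow> (\<lambda>x. f x - g x) \<in> polyfun"
proof -
  assume "f \<in> polyfun" "g \<in> polyfun"
  then have "(\<lambda>x. f x + (-1) * g x) \<in> polyfun" by (intro pf_add pf_cmul)
  then show ?thesis by simp
qed
lemma pf_sum[intro]: "finite A \<Longrightarrow> (\<And>a. a \<in> A \<Longrightarrow> f a \<in> polyfun) \<Longrightarrow> (\<lambda>x. \<Sum>a\<in>A. f a x) \<in> polyfun"
proof (induction A rule: finite_induct)
  case empty then show ?case by simp
next
  case (insert a A)
  then show ?case using pf_add[of "f a" "\<lambda>x. \<Sum>a\<in>A. f a x"] by simp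
qed

lemma pf_lin_comp: "f \<in> polyfun \<Longrightarrow> (\<lambda>x. f (P *v fst x, Q *v snd x)) \<in> polyfun"
proof (induction rule: polyfun.induct)
  case (qcoord i)
  have "(\<lambda>x. fst (P *v fst x, Q *v snd x) $ i) = (\<lambda>x. \<Sum>k\<in>UNIV. P$i$k * fst x $ k)"
    by (simp add: matrix_vector_mult_def)
  then show ?case by (auto intro!: pf_sum pf_cmul)
next
  case (pcoord i)
  have "(\<lambda>x. snd (P *v fst x, Q *v snd x) $ i) = (\<lambda>x. \<Sum>k\<in>UNIV. Q$i$k * snd x $ k)"
    by (simp add: matrix_vector_mult_def)
  then show ?case by (auto intro!: pf_sum pf_cmul)
qed auto

lemma pf_cot: "f \<in> polyfun \<Longrightarrow> f \<circ> cot_act M \<in> polyfun"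
  using pf_lin_comp[of f M "transpose (matrix_inv M)"] by (simp add: cot_act_def o_def)

section \<open>Derivations\<close>

definition subalg :: "('a \<Rightarrow> complex) set \<Rightarrow> bool" where
  "subalg S \<longleftrightarrow> (\<forall>c. (\<lambda>_. c) \<in> S) \<and> (\<forall>f\<in>S. \<forall>g\<in>S. (\<lambda>x. f x + g x) \<in> S) \<and> (\<forall>f\<in>S. \<forall>g\<in>S. (\<lambda>x. f x * g x) \<in> S)"

lemma subalg_polyfun: "subalg polyfun" unfolding subalg_def by auto

context fixes S assumes S: "subalg S" begin

lemma sa_const[intro,simp]: "(\<lambda>_. c) \<in> S" using S unfolding subalg_def by auto
lemma sa_add[intro]: "f \<in> S \<Longrightarrow> g \<in> S \<Longrightarrow> (\<lambda>x. f x + g x) \<in> S" using S unfolding subalg_def by auto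
lemma sa_mult[intro]: "f \<in> S \<Longrightarrow> g \<in> S \<Longrightarrow> (\<lambda>x. f x * g x) \<in> S" using S unfolding subalg_def by auto
lemma sa_cmul[intro]: "f \<in> S \<Longrightarrow> (\<lambda>x. c * f x) \<in> S"
  using sa_mult[OF sa_const[of c]] by blast
lemma sa_diff[intro]: "f \<in> S \<Longrightarrow> g \<in> S \<Longrightarrow> (\<lambda>x. f x - g x) \<in> S"
proof -
  assume "f \<in> S" "g \<in> S"
  then have "(\<lambda>x. f x + (\<lambda>x. (-1) * g x) x) \<in> S" using sa_add[of f "\<lambda>x. (-1) * g x"] sa_cmul[of g "-1"] by blast
  then show ?thesis by simp
qed
lemma sa_sum[intro]: "finite A \<Longrightarrow> (\<And>a. a \<in> A \<Longrightarrow> f a \<in> S) \<Longrightarrow> (\<lambda>x. \<Sum>a\<in>A. f a x) \<in> S"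
proof (induction A rule: finite_induct)
  case empty then show ?case by simp
next
  case (insert a A)
  then show ?case using sa_add[of "f a" "\<lambda>x. \<Sum>a\<in>A. f a x"] by simp
qed

context fixes D assumes D: "D \<in> derivs S" begin
lemma d_in[intro]: "f \<in> S \<Longrightarrow> D f \<in> S" using D unfolding derivs_def by auto
lemma d_add: "f \<in> S \<Longrightarrow> g \<in> S \<Longrightarrow> D (\<lambda>x. f x + g x) = (\<lambda>x. D f x + D g x)"
  using D unfolding derivs_def by auto
lemma d_cmul: "f \<in> S \<Longrightarrow> D (\<lambda>x. c * f x) = (\<lambda>x. c * D f x)"
  using D unfolding derivs_def by auto
lemma d_mult: "f \<in> S \<Longrightarrow> g \<in> S \<Longrightarrow> D (\<lambda>x. f x * g x) = (\<lambda>x. f x * D g x + D f x * g x)"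
  using D unfolding derivs_def by auto
lemma d_out: "f \<notin> S \<Longrightarrow> D f = (\<lambda>x. 0)"
  using D unfolding derivs_def by auto
lemma d_const: "D (\<lambda>_. c) = (\<lambda>_. 0)"
proof -
  have "D (\<lambda>x. (\<lambda>_. 1) x * (\<lambda>_. 1) x) = (\<lambda>x. 1 * D (\<lambda>_. 1) x + D (\<lambda>_. 1) x * 1)"
    by (rule d_mult) auto
  then have "D (\<lambda>_. 1) = (\<lambda>x. 2 * D (\<lambda>_. 1) x)" by simp
  then have 1: "D (\<lambda>_. 1) = (\<lambda>_. 0)" by (metis (no_types, lifting) add_cancel_right_right mult_2)
  have "D (\<lambda>x. c * (\<lambda>_. 1) x) = (\<lambda>x. c * D (\<lambda>_. 1) x)" by (rule d_cmul) auto
  then show ?thesis using 1 by simp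
qed
lemma d_diff: "f \<in> S \<Longrightarrow> g \<in> S \<Longrightarrow> D (\<lambda>x. f x - g x) = (\<lambda>x. D f x - D g x)"
proof -
  assume f: "f \<in> S" and g: "g \<in> S"
  have "D (\<lambda>x. f x + (\<lambda>x. (-1) * g x) x) = (\<lambda>x. D f x + D (\<lambda>x. (-1) * g x) x)"
    using d_add[OF f sa_cmul[OF g, of "-1"]] by simp
  moreover have "D (\<lambda>x. (-1) * g x) = (\<lambda>x. (-1) * D g x)" using g by (rule d_cmul)
  ultimately show ?thesis by simp
qed
lemma d_sum: "finite A \<Longrightarrow> (\<And>a. a \<in> A \<Longrightarrow> f a \<in> S) \<Longrightarrow> D (\<lambda>x. \<Sum>a\<in>A. f a x) = (\<lambda>x. \<Sum>a\<in>A. D (f a) x)"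
proof (induction A rule: finite_induct)
  case empty then show ?case by (simp add: d_const)
next
  case (insert a A)
  have "D (\<lambda>x. f a x + (\<lambda>x. \<Sum>a\<in>A. f a x) x) = (\<lambda>x. D (f a) x + D (\<lambda>x. \<Sum>a\<in>A. f a x) x)"
    using insert by (intro d_add) auto
  then show ?case using insert by simp
qed
lemma d_lincomb: "finite A \<Longrightarrow> (\<And>a. a \<in> A \<Longrightarrow> f a \<in> S) \<Longrightarrow> D (\<lambda>x. \<Sum>a\<in>A. c a * f a x) = (\<lambda>x. \<Sum>a\<in>A. c a * D (f a) x)"
proof -
  assume A: "finite A" and f: "\<And>a. a \<in> A \<Longrightarrow> f a \<in> S"
  have "D (\<lambda>x. \<Sum>a\<in>A. (\<lambda>a x. c a * f a x) a x) = (\<lambda>x. \<Sum>a\<in>A. D ((\<lambda>a x. c a * f a x) a) x)"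
    using A f by (intro d_sum) auto
  then show ?thesis using f by (simp add: d_cmul)
qed
end
end

lemma derivs_coord_eq:
  assumes D1: "D1 \<in> derivs polyfun" and D2: "D2 \<in> derivs polyfun"
    and q: "\<And>i. D1 (qc i) = D2 (qc i)" and p: "\<And>i. D1 (pc i) = D2 (pc i)"
  shows "D1 = D2"
proof
  fix f
  show "D1 f = D2 f"
  proof (cases "f \<in> polyfun")
    case True then show ?thesis
    proof (induction rule: polyfun.induct)
      case (const c) then show ?case using d_const[OF subalg_polyfun D1] d_const[OF subalg_polyfun D2] by simp
    next
      case (add f g) then show ?case using d_add[OF subalg_polyfun D1] d_add[OF subalg_polyfun D2] by simp
    next
      case (mult f g) then show ?case using d_mult[OF subalg_polyfun D1] d_mult[OF subalg_polyfun D2] by simp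
    qed (use q p in auto)
  next
    case False then show ?thesis using d_out[OF subalg_polyfun D1] d_out[OF subalg_polyfun D2] by simp
  qed
qed



lemma minv: "invertible M \<Longrightarrow> M ** matrix_inv M = mat 1 \<and> matrix_inv M ** M = mat 1"
  unfolding invertible_def matrix_inv_def by (rule someI_ex)

lemma minv_unique:
  fixes M N :: "'a::comm_ring_1^'n::finite^'n"
  assumes "M ** N = mat 1" "N ** M = mat 1" shows "matrix_inv M = N"
proof -
  have inv: "invertible M" using assms unfolding invertible_def by blast
  have "matrix_inv M = matrix_inv M ** (M ** N)" using assms by simp
  also have "\<dots> = (matrix_inv M ** M) ** N" by (simp add: matrix_mul_assoc)
  also have "\<dots> = N" using minv[OF inv] by simp
  finally show ?thesis .
qed

lemma minv_mul:
  fixes A B :: "'a::comm_ring_1^'n::finite^'n"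
  assumes A: "invertible A" and B: "invertible B"
  shows "matrix_inv (A ** B) = matrix_inv B ** matrix_inv A"
proof (rule minv_unique)
  have "A ** B ** (matrix_inv B ** matrix_inv A) = A ** (B ** matrix_inv B) ** matrix_inv A"
    by (simp add: matrix_mul_assoc)
  then show "A ** B ** (matrix_inv B ** matrix_inv A) = mat 1" using minv[OF A] minv[OF B] by simp
  have "matrix_inv B ** matrix_inv A ** (A ** B) = matrix_inv B ** (matrix_inv A ** A) ** B"
    by (simp add: matrix_mul_assoc)
  then show "matrix_inv B ** matrix_inv A ** (A ** B) = mat 1" using minv[OF A] minv[OF B] by simp
qed

lemma cot_mul:
  assumes A: "invertible A" and B: "invertible B"
  shows "cot_act (A ** B) x = cot_act A (cot_act B x)"
proof -
  have "transpose (matrix_inv (A ** B)) = transpose (matrix_inv A) ** transpose (matrix_inv B)"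
    using minv_mul[OF A B] by (simp add: matrix_transpose_mul)
  then show ?thesis unfolding cot_act_def
    by (simp del: transpose_matrix_vector add: matrix_vector_mul_assoc)
qed

lemma minv_one: "matrix_inv (mat 1 :: 'a::comm_ring_1^'n::finite^'n) = mat 1"
  by (rule minv_unique) simp_all

lemma cot_one: "cot_act (mat 1) x = x"
  unfolding cot_act_def by (simp del: transpose_matrix_vector add: minv_one)

definition Om :: "'n::finite pt \<Rightarrow> 'n pt \<Rightarrow> complex" where
  "Om a b = (\<Sum>i\<in>UNIV. fst a $ i * snd b $ i - snd a $ i * fst b $ i)"

lemma bil:
  fixes M N :: "complex^'n::finite^'n"
  shows "(\<Sum>i\<in>UNIV. (M *v u)$i * (N *v w)$i) = (\<Sum>i\<in>UNIV. u$i * ((transpose M ** N) *v w)$i)"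
proof -
  have "(\<Sum>i\<in>UNIV. (M *v u)$i * (N *v w)$i) = (\<Sum>i\<in>UNIV. \<Sum>j\<in>UNIV. \<Sum>k\<in>UNIV. M$i$j * u$j * (N$i$k * w$k))"
    by (simp add: matrix_vector_mult_def sum_product)
  also have "\<dots> = (\<Sum>j\<in>UNIV. \<Sum>i\<in>UNIV. \<Sum>k\<in>UNIV. M$i$j * u$j * (N$i$k * w$k))"
    by (rule sum.swap)
  also have "\<dots> = (\<Sum>j\<in>UNIV. \<Sum>k\<in>UNIV. \<Sum>i\<in>UNIV. M$i$j * u$j * (N$i$k * w$k))"
    by (rule sum.cong[OF refl], rule sum.swap)
  also have "\<dots> = (\<Sum>j\<in>UNIV. u$j * (\<Sum>k\<in>UNIV. (\<Sum>i\<in>UNIV. M$i$j * N$i$k) * w$k))"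
    by (simp add: sum_distrib_left sum_distrib_right mult_ac)
  also have "\<dots> = (\<Sum>i\<in>UNIV. u$i * ((transpose M ** N) *v w)$i)"
    by (simp del: transpose_matrix_vector add: matrix_vector_mult_def matrix_matrix_mult_def transpose_def)
  finally show ?thesis .
qed

lemma Om_inv:
  assumes M: "invertible M"
  shows "Om (cot_act M a) (cot_act M b) = Om a b"
proof -
  let ?N = "transpose (matrix_inv M)"
  have 1: "transpose M ** ?N = mat 1"
    using minv[OF M] by (metis matrix_transpose_mul transpose_mat)
  have 2: "transpose ?N ** M = mat 1" using minv[OF M] by simp
  have "Om (cot_act M a) (cot_act M b) =
     (\<Sum>i\<in>UNIV. (M *v fst a)$i * (?N *v snd b)$i) - (\<Sum>i\<in>UNIV. (?N *v snd a)$i * (M *v fst b)$i)"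
    unfolding Om_def cot_act_def by (simp del: transpose_matrix_vector add: sum_subtractf)
  also have "\<dots> = (\<Sum>i\<in>UNIV. fst a$i * snd b$i) - (\<Sum>i\<in>UNIV. snd a$i * fst b$i)"
    unfolding bil 1 2 by simp
  also have "\<dots> = Om a b" unfolding Om_def by (simp add: sum_subtractf)
  finally show ?thesis .
qed

definition wvec :: "(('n::finite pt \<Rightarrow> complex) \<Rightarrow> ('n pt \<Rightarrow> complex)) \<Rightarrow> 'n pt \<Rightarrow> 'n pt" where
  "wvec W x = ((\<chi> i. W (qc i) x), (\<chi> i. W (pc i) x))"

lemma omega0_Om: "omega0 X Y x = Om (wvec X x) (wvec Y x)"
  unfolding omega0_def Om_def wvec_def by simp

lemma q_cot: "(\<lambda>y. fst (cot_act M y) $ i) = (\<lambda>y. \<Sum>k\<in>UNIV. M$i$k * fst y $ k)"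
  unfolding cot_act_def by (simp add: matrix_vector_mult_def)
lemma p_cot: "(\<lambda>y. snd (cot_act M y) $ i) = (\<lambda>y. \<Sum>k\<in>UNIV. transpose (matrix_inv M)$i$k * snd y $ k)"
  unfolding cot_act_def by (simp del: transpose_matrix_vector add: matrix_vector_mult_def)

lemma wvec_equiv:
  assumes W: "W \<in> derivs polyfun"
    and eq: "\<And>f. f \<in> polyfun \<Longrightarrow> W (f \<circ> cot_act M) = W f \<circ> cot_act M"
  shows "wvec W (cot_act M x) = cot_act M (wvec W x)"
proof -
  have q: "W (qc i) (cot_act M x) = (\<Sum>k\<in>UNIV. M$i$k * W (qc k) x)" for i
  proof -
    have "W (qc i) (cot_act M x) = W (qc i \<circ> cot_act M) x" using eq[of "qc i"] by (simp add: o_def)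
    also have "qc i \<circ> cot_act M = (\<lambda>y. \<Sum>k\<in>UNIV. M$i$k * fst y $ k)" using q_cot[of M i] by (simp add: o_def)
    also have "W \<dots> x = (\<Sum>k\<in>UNIV. M$i$k * W (qc k) x)"
      using d_lincomb[OF subalg_polyfun W, of UNIV "\<lambda>k. qc k" "\<lambda>k. M$i$k"] by simp
    finally show ?thesis .
  qed
  have p: "W (pc i) (cot_act M x) = (\<Sum>k\<in>UNIV. transpose (matrix_inv M)$i$k * W (pc k) x)" for i
  proof -
    have "W (pc i) (cot_act M x) = W (pc i \<circ> cot_act M) x" using eq[of "pc i"] by (simp add: o_def)
    also have "pc i \<circ> cot_act M = (\<lambda>y. \<Sum>k\<in>UNIV. transpose (matrix_inv M)$i$k * snd y $ k)" using p_cot[of M i] by (simp add: o_def)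
    also have "W \<dots> x = (\<Sum>k\<in>UNIV. transpose (matrix_inv M)$i$k * W (pc k) x)"
      using d_lincomb[OF subalg_polyfun W, of UNIV "\<lambda>k. pc k" "\<lambda>k. transpose (matrix_inv M)$i$k"] by simp
    finally show ?thesis .
  qed
  have "wvec W (cot_act M x) = ((\<chi> i. \<Sum>k\<in>UNIV. M$i$k * W (qc k) x), (\<chi> i. \<Sum>k\<in>UNIV. transpose (matrix_inv M)$i$k * W (pc k) x))"
    unfolding wvec_def using q p by simp
  also have "\<dots> = cot_act M (wvec W x)"
    by (simp del: transpose_matrix_vector add: cot_act_def wvec_def matrix_vector_mult_def)
  finally show ?thesis .
qed



lemma exists_bump:
  fixes x :: "'n::finite pt"
  shows "finite F \<Longrightarrow> x \<notin> F \<Longrightarrow> \<exists>v\<in>polyfun. v x = 1 \<and> (\<forall>y\<in>F. v y = 0)"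
proof (induction F rule: finite_induct)
  case empty then show ?case by (intro bexI[of _ "\<lambda>_. 1"]) auto
next
  case (insert y F)
  then obtain v where v: "v \<in> polyfun" "v x = 1" "\<forall>y\<in>F. v y = 0" by auto
  have "x \<noteq> y" using insert by auto
  then have "\<exists>L\<in>polyfun. L x \<noteq> L y"
  proof -
    have "fst x \<noteq> fst y \<or> snd x \<noteq> snd y" using \<open>x \<noteq> y\<close> by (simp add: prod_eq_iff)
    then obtain i where "fst x $ i \<noteq> fst y $ i \<or> snd x $ i \<noteq> snd y $ i" by (auto simp: vec_eq_iff)
    then show ?thesis by (metis pf_p pf_q)
  qed
  then obtain L where L: "L \<in> polyfun" "L x \<noteq> L y" by auto
  let ?c = "inverse (L x - L y)"
  let ?w = "\<lambda>z. v z * (?c * (L z - L y))"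
  have "?w \<in> polyfun" using v L by (intro pf_mult pf_cmul pf_diff) auto
  moreover have "?w x = 1" using v L by simp
  moreover have "\<forall>z\<in>insert y F. ?w z = 0" using v by auto
  ultimately show ?case by (intro bexI[of _ ?w]) auto
qed

locale setting = group G for G :: "('g, 'b) monoid_scheme" (structure) +
  fixes \<rho> :: "'g \<Rightarrow> complex^'n::finite^'n"
  assumes fin: "finite (carrier G)"
    and rinv: "\<forall>g\<in>carrier G. invertible (\<rho> g)"
    and rhom: "\<forall>g\<in>carrier G. \<forall>h\<in>carrier G. \<rho> (g \<otimes> h) = \<rho> g ** \<rho> h"
begin

definition gam :: "'g \<Rightarrow> 'n pt \<Rightarrow> 'n pt" where "gam g = cot_act (\<rho> g)"

lemma rinv': "g \<in> carrier G \<Longrightarrow> invertible (\<rho> g)" using rinv by auto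

lemma gam_mul: assumes "g \<in> carrier G" "h \<in> carrier G" shows "gam (g \<otimes> h) x = gam g (gam h x)"
  using assms rhom cot_mul[OF rinv'[OF assms(1)] rinv'[OF assms(2)]] unfolding gam_def by simp

lemma rho_one: "\<rho> \<one> = mat 1"
proof -
  have e: "\<rho> \<one> = \<rho> \<one> ** \<rho> \<one>" using rhom by (metis one_closed l_one)
  have i: "invertible (\<rho> \<one>)" using rinv by auto
  have "mat 1 = matrix_inv (\<rho> \<one>) ** \<rho> \<one>" using minv[OF i] by simp
  also have "\<dots> = matrix_inv (\<rho> \<one>) ** (\<rho> \<one> ** \<rho> \<one>)" using e by simp
  also have "\<dots> = (matrix_inv (\<rho> \<one>) ** \<rho> \<one>) ** \<rho> \<one>" by (simp add: matrix_mul_assoc)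
  also have "\<dots> = \<rho> \<one>" using minv[OF i] by simp
  finally show ?thesis by simp
qed

lemma gam_one[simp]: "gam \<one> x = x"
  unfolding gam_def rho_one by (rule cot_one)

lemma gam_inv1: "g \<in> carrier G \<Longrightarrow> gam g (gam (inv g) x) = x"
  using gam_mul[of g "inv g" x] by simp
lemma gam_inv2: "g \<in> carrier G \<Longrightarrow> gam (inv g) (gam g x) = x"
  using gam_mul[of "inv g" g x] by simp

lemma bij_rmult: "k \<in> carrier G \<Longrightarrow> bij_betw (\<lambda>g. g \<otimes> k) (carrier G) (carrier G)"
  by (rule bij_betwI[where g="\<lambda>g. g \<otimes> inv k"]) (auto simp: m_assoc)

abbreviation "RG \<equiv> invariants G \<rho>"

lemma inv_iff: "f \<in> RG \<longleftrightarrow> f \<in> polyfun \<and> (\<forall>g\<in>carrier G. \<forall>x. f (gam g x) = f x)"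
  unfolding invariants_def gam_def by (auto simp: fun_eq_iff)

lemma subalg_RG: "subalg RG"
  unfolding subalg_def by (auto simp: inv_iff)

lemma RG_poly: "f \<in> RG \<Longrightarrow> f \<in> polyfun" using inv_iff by auto

lemma invd_iff: "W \<in> inv_derivs G \<rho> \<longleftrightarrow> W \<in> derivs polyfun \<and> (\<forall>g\<in>carrier G. \<forall>f\<in>polyfun. W (f \<circ> gam g) = W f \<circ> gam g)"
  unfolding inv_derivs_def gam_def by auto

lemma invd_gam: "W \<in> inv_derivs G \<rho> \<Longrightarrow> g \<in> carrier G \<Longrightarrow> f \<in> polyfun \<Longrightarrow> W f (gam g x) = W (f \<circ> gam g) x"
  using invd_iff by auto

lemma invd_der: "W \<in> inv_derivs G \<rho> \<Longrightarrow> W \<in> derivs polyfun" using invd_iff by auto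

lemma pf_gam: "f \<in> polyfun \<Longrightarrow> (\<lambda>y. f (gam g y)) \<in> polyfun"
  using pf_cot[of f "\<rho> g"] unfolding gam_def by (simp add: o_def)

definition Reyn :: "('n pt \<Rightarrow> complex) \<Rightarrow> 'n pt \<Rightarrow> complex" where
  "Reyn h = (\<lambda>y. \<Sum>g\<in>carrier G. h (gam g y))"

lemma Reyn_RG: "h \<in> polyfun \<Longrightarrow> Reyn h \<in> RG"
  unfolding inv_iff
proof (intro conjI ballI allI)
  assume h: "h \<in> polyfun"
  show "Reyn h \<in> polyfun" unfolding Reyn_def using fin h by (intro pf_sum pf_gam)
  fix k x assume k: "k \<in> carrier G"
  have "Reyn h (gam k x) = (\<Sum>g\<in>carrier G. h (gam (g \<otimes> k) x))"
    unfolding Reyn_def using k by (intro sum.cong) (auto simp: gam_mul)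
  also have "\<dots> = (\<Sum>g\<in>carrier G. h (gam g x))"
    using sum.reindex_bij_betw[OF bij_rmult[OF k], of "\<lambda>g. h (gam g x)"] by simp
  finally show "Reyn h (gam k x) = Reyn h x" unfolding Reyn_def .
qed

lemma D_Reyn: assumes W: "W \<in> inv_derivs G \<rho>" and h: "h \<in> polyfun"
  shows "W (Reyn h) = Reyn (W h)"
proof -
  have "W (Reyn h) = W (\<lambda>y. \<Sum>g\<in>carrier G. (\<lambda>g y. h (gam g y)) g y)" unfolding Reyn_def by simp
  also have "\<dots> = (\<lambda>y. \<Sum>g\<in>carrier G. W (\<lambda>y. h (gam g y)) y)"
    using d_sum[OF subalg_polyfun invd_der[OF W], of "carrier G" "\<lambda>g y. h (gam g y)"] fin h pf_gam by simp
  also have "\<dots> = Reyn (W h)" unfolding Reyn_def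
    using invd_gam[OF W _ h] by (simp add: o_def)
  finally show ?thesis .
qed

lemma stab_sum:
  assumes v1: "v x = 1" and v0: "\<forall>y\<in>(\<lambda>g. gam g x) ` carrier G - {x}. v y = 0"
  shows "(\<Sum>g\<in>carrier G. v (gam g x) * s (gam g x)) = of_nat (card {g\<in>carrier G. gam g x = x}) * s x"
proof -
  have "(\<Sum>g\<in>carrier G. v (gam g x) * s (gam g x)) = (\<Sum>g\<in>carrier G. if gam g x = x then s x else 0)"
    using v1 v0 by (intro sum.cong) auto
  also have "\<dots> = (\<Sum>g\<in>{g\<in>carrier G. gam g x = x}. s x)"
    using fin by (simp add: sum.inter_filter[symmetric])
  finally show ?thesis by simp
qed

lemma stab_card: "card {g\<in>carrier G. gam g x = x} \<noteq> 0"
proof -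
  have "\<one> \<in> {g\<in>carrier G. gam g x = x}" by simp
  then have "{g\<in>carrier G. gam g x = x} \<noteq> {}" by blast
  moreover have "finite {g\<in>carrier G. gam g x = x}" using fin by simp
  ultimately show ?thesis by simp
qed

lemma inv_derivs_eq:
  assumes D1: "D1 \<in> inv_derivs G \<rho>" and D2: "D2 \<in> inv_derivs G \<rho>"
    and eq: "\<And>f. f \<in> RG \<Longrightarrow> D1 f = D2 f"
  shows "D1 = D2"
proof
  fix c
  show "D1 c = D2 c"
  proof (cases "c \<in> polyfun")
    case False
    then show ?thesis using d_out[OF subalg_polyfun invd_der[OF D1]] d_out[OF subalg_polyfun invd_der[OF D2]] by simp
  next
    case c: True
    show ?thesis
    proof
      fix x
      let ?F = "(\<lambda>g. gam g x) ` carrier G - {x}"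
      obtain v where v: "v \<in> polyfun" "v x = 1" "\<forall>y\<in>?F. v y = 0"
        using exists_bump[of ?F x] fin by auto
      let ?N = "of_nat (card {g\<in>carrier G. gam g x = x}) :: complex"
      have N: "?N \<noteq> 0" using stab_card by simp
      have R: "Reyn (D1 h) x = Reyn (D2 h) x" if h: "h \<in> polyfun" for h
      proof -
        have "D1 (Reyn h) = D2 (Reyn h)" using eq Reyn_RG h by auto
        then show ?thesis using D_Reyn[OF D1 h] D_Reyn[OF D2 h] by simp
      qed
      have vv: "Reyn (Dk (\<lambda>y. v y * v y)) x = ?N * (2 * Dk v x)" if Dk: "Dk \<in> inv_derivs G \<rho>" for Dk
      proof -
        have "Dk (\<lambda>y. v y * v y) = (\<lambda>y. v y * Dk v y + Dk v y * v y)"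
          using d_mult[OF subalg_polyfun invd_der[OF Dk] v(1) v(1)] .
        then have "Reyn (Dk (\<lambda>y. v y * v y)) x = (\<Sum>g\<in>carrier G. v (gam g x) * (\<lambda>y. 2 * Dk v y) (gam g x))"
          unfolding Reyn_def by (simp add: algebra_simps)
        also have "\<dots> = ?N * (2 * Dk v x)" by (rule stab_sum[OF v(2) v(3)])
        finally show ?thesis .
      qed
      have vvc: "Reyn (Dk (\<lambda>y. v y * (v y * c y))) x = ?N * (Dk c x + 2 * Dk v x * c x)" if Dk: "Dk \<in> inv_derivs G \<rho>" for Dk
      proof -
        have pvc: "(\<lambda>y. v y * c y) \<in> polyfun" using v c by auto
        have "Dk (\<lambda>y. v y * (v y * c y)) = (\<lambda>y. v y * Dk (\<lambda>y. v y * c y) y + Dk v y * (v y * c y))"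
          using d_mult[OF subalg_polyfun invd_der[OF Dk] v(1) pvc] .
        moreover have "Dk (\<lambda>y. v y * c y) = (\<lambda>y. v y * Dk c y + Dk v y * c y)"
          using d_mult[OF subalg_polyfun invd_der[OF Dk] v(1) c] .
        ultimately have "Reyn (Dk (\<lambda>y. v y * (v y * c y))) x = (\<Sum>g\<in>carrier G. v (gam g x) * (\<lambda>y. v y * Dk c y + 2 * Dk v y * c y) (gam g x))"
          unfolding Reyn_def by (simp add: algebra_simps)
        also have "\<dots> = ?N * (v x * Dk c x + 2 * Dk v x * c x)" by (rule stab_sum[OF v(2) v(3)])
        finally show ?thesis using v(2) by simp
      qed
      have "?N * (2 * D1 v x) = Reyn (D1 (\<lambda>y. v y * v y)) x" using vv[OF D1] by simp
      also have "\<dots> = Reyn (D2 (\<lambda>y. v y * v y)) x" by (rule R[OF pf_mult[OF v(1) v(1)]])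
      also have "\<dots> = ?N * (2 * D2 v x)" by (rule vv[OF D2])
      finally have vx: "D1 v x = D2 v x" using N by simp
      have "?N * (D1 c x + 2 * D1 v x * c x) = Reyn (D1 (\<lambda>y. v y * (v y * c y))) x" using vvc[OF D1] by simp
      also have "\<dots> = Reyn (D2 (\<lambda>y. v y * (v y * c y))) x" by (rule R[OF pf_mult[OF v(1) pf_mult[OF v(1) c]]])
      also have "\<dots> = ?N * (D2 c x + 2 * D2 v x * c x)" by (rule vvc[OF D2])
      finally have "D1 c x + 2 * D1 v x * c x = D2 c x + 2 * D2 v x * c x" using N by simp
      then show "D1 c x = D2 c x" using vx by simp
    qed
  qed
qed

end


definition padd :: "'n::finite pt \<Rightarrow> 'n pt \<Rightarrow> 'n pt" where
  "padd x y = (fst x + fst y, snd x + snd y)"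
definition psc :: "complex \<Rightarrow> 'n::finite pt \<Rightarrow> 'n pt" where
  "psc t v = (t *s fst v, t *s snd v)"
definition dd :: "('n::finite pt \<Rightarrow> complex) \<Rightarrow> 'n pt \<Rightarrow> 'n pt \<Rightarrow> complex" where
  "dd f x v = deriv (\<lambda>t. f (padd x (psc t v))) 0"
definition polymap :: "('n::finite pt \<Rightarrow> 'n pt) \<Rightarrow> bool" where
  "polymap \<xi> \<longleftrightarrow> (\<forall>i. (\<lambda>x. fst (\<xi> x) $ i) \<in> polyfun \<and> (\<lambda>x. snd (\<xi> x) $ i) \<in> polyfun)"

lemma padd0[simp]: "padd x (psc 0 v) = x"
  unfolding padd_def psc_def by (simp add: vec_eq_iff)

lemma dd_ex: "f \<in> polyfun \<Longrightarrow> \<exists>F. (\<forall>x v. ((\<lambda>t. f (padd x (psc t v))) has_field_derivative F x v) (at 0))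
    \<and> (\<forall>\<xi>. polymap \<xi> \<longrightarrow> (\<lambda>x. F x (\<xi> x)) \<in> polyfun)"
proof (induction rule: polyfun.induct)
  case (const c)
  show ?case by (intro exI[of _ "\<lambda>x v. 0"]) auto
next
  case (qcoord i)
  have "((\<lambda>t. fst (padd x (psc t v)) $ i) has_field_derivative fst v $ i) (at 0)" for x v :: "'a pt"
    unfolding padd_def psc_def by (auto intro!: derivative_eq_intros)
  then show ?case unfolding polymap_def by (intro exI[of _ "\<lambda>x v. fst v $ i"]) auto
next
  case (pcoord i)
  have "((\<lambda>t. snd (padd x (psc t v)) $ i) has_field_derivative snd v $ i) (at 0)" for x v :: "'a pt"
    unfolding padd_def psc_def by (auto intro!: derivative_eq_intros)
  then show ?case unfolding polymap_def by (intro exI[of _ "\<lambda>x v. snd v $ i"]) auto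
next
  case (add f g)
  then obtain F1 F2 where F1: "\<forall>x v. ((\<lambda>t. f (padd x (psc t v))) has_field_derivative F1 x v) (at 0)"
      "\<forall>\<xi>. polymap \<xi> \<longrightarrow> (\<lambda>x. F1 x (\<xi> x)) \<in> polyfun"
    and F2: "\<forall>x v. ((\<lambda>t. g (padd x (psc t v))) has_field_derivative F2 x v) (at 0)"
      "\<forall>\<xi>. polymap \<xi> \<longrightarrow> (\<lambda>x. F2 x (\<xi> x)) \<in> polyfun" by blast
  show ?case
    by (intro exI[of _ "\<lambda>x v. F1 x v + F2 x v"] conjI allI impI DERIV_add pf_add)
       (use F1 F2 in auto)
next
  case (mult f g)
  then obtain F1 F2 where F1: "\<forall>x v. ((\<lambda>t. f (padd x (psc t v))) has_field_derivative F1 x v) (at 0)"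
      "\<forall>\<xi>. polymap \<xi> \<longrightarrow> (\<lambda>x. F1 x (\<xi> x)) \<in> polyfun"
    and F2: "\<forall>x v. ((\<lambda>t. g (padd x (psc t v))) has_field_derivative F2 x v) (at 0)"
      "\<forall>\<xi>. polymap \<xi> \<longrightarrow> (\<lambda>x. F2 x (\<xi> x)) \<in> polyfun" by blast
  have "((\<lambda>t. f (padd x (psc t v)) * g (padd x (psc t v))) has_field_derivative f x * F2 x v + F1 x v * g x) (at 0)" for x v
    using DERIV_mult'[OF F1(1)[rule_format, of x v] F2(1)[rule_format, of x v]] by simp
  moreover have "(\<lambda>x. f x * F2 x (\<xi> x) + F1 x (\<xi> x) * g x) \<in> polyfun" if "polymap \<xi>" for \<xi>
    using that F1 F2 mult by (intro pf_add pf_mult) auto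
  ultimately show ?case
    by (intro exI[of _ "\<lambda>x v. f x * F2 x v + F1 x v * g x"]) auto
qed

lemma dd_deriv: "f \<in> polyfun \<Longrightarrow> ((\<lambda>t. f (padd x (psc t v))) has_field_derivative dd f x v) (at 0)"
proof -
  assume f: "f \<in> polyfun"
  then obtain F where F: "\<forall>x v. ((\<lambda>t. f (padd x (psc t v))) has_field_derivative F x v) (at 0)"
    using dd_ex by blast
  have F': "((\<lambda>t. f (padd x (psc t v))) has_field_derivative F x v) (at 0)" using F by blast
  then have "dd f x v = F x v" unfolding dd_def by (rule DERIV_imp_deriv)
  then show ?thesis using F' by simp
qed

lemma dd_poly: "f \<in> polyfun \<Longrightarrow> polymap \<xi> \<Longrightarrow> (\<lambda>x. dd f x (\<xi> x)) \<in> polyfun"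
proof -
  assume f: "f \<in> polyfun" and xi: "polymap \<xi>"
  then obtain F where F: "\<forall>x v. ((\<lambda>t. f (padd x (psc t v))) has_field_derivative F x v) (at 0)"
      "\<forall>\<xi>. polymap \<xi> \<longrightarrow> (\<lambda>x. F x (\<xi> x)) \<in> polyfun"
    using dd_ex by blast
  have "dd f x v = F x v" for x v
  proof -
    have F': "((\<lambda>t. f (padd x (psc t v))) has_field_derivative F x v) (at 0)" using F by blast
    then show ?thesis unfolding dd_def by (rule DERIV_imp_deriv)
  qed
  then have "(\<lambda>x. dd f x (\<xi> x)) = (\<lambda>x. F x (\<xi> x))" by simp
  then show ?thesis using F xi by simp
qed

lemma dd_add: "f \<in> polyfun \<Longrightarrow> g \<in> polyfun \<Longrightarrow> dd (\<lambda>x. f x + g x) x v = dd f x v + dd g x v"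
  unfolding dd_def[of "\<lambda>x. f x + g x"]
  by (intro DERIV_imp_deriv DERIV_add dd_deriv)

lemma dd_cmul: "f \<in> polyfun \<Longrightarrow> dd (\<lambda>x. c * f x) x v = c * dd f x v"
  unfolding dd_def[of "\<lambda>x. c * f x"]
  by (intro DERIV_imp_deriv DERIV_cmult dd_deriv)

lemma dd_mult: "f \<in> polyfun \<Longrightarrow> g \<in> polyfun \<Longrightarrow> dd (\<lambda>x. f x * g x) x v = f x * dd g x v + dd f x v * g x"
  unfolding dd_def[of "\<lambda>x. f x * g x"]
  using DERIV_mult'[OF dd_deriv[of f x v] dd_deriv[of g x v]]
  by (intro DERIV_imp_deriv) simp

lemma dd_q: "dd (qc i) x v = fst v $ i"
  unfolding dd_def padd_def psc_def by (intro DERIV_imp_deriv) (auto intro!: derivative_eq_intros)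
lemma dd_p: "dd (pc i) x v = snd v $ i"
  unfolding dd_def padd_def psc_def by (intro DERIV_imp_deriv) (auto intro!: derivative_eq_intros)

definition Zv :: "('n::finite pt \<Rightarrow> 'n pt) \<Rightarrow> ('n pt \<Rightarrow> complex) \<Rightarrow> 'n pt \<Rightarrow> complex" where
  "Zv \<xi> f = (if f \<in> polyfun then (\<lambda>x. dd f x (\<xi> x)) else (\<lambda>x. 0))"

lemma Zv_der: "polymap \<xi> \<Longrightarrow> Zv \<xi> \<in> derivs polyfun"
  unfolding derivs_def Zv_def
  by (auto simp: dd_poly dd_add dd_cmul dd_mult pf_add pf_cmul pf_mult)

lemma wvec_Zv: "wvec (Zv \<xi>) x = \<xi> x"
  unfolding wvec_def Zv_def by (simp add: dd_q dd_p)

lemma cot_lin: "cot_act M (padd x (psc t v)) = padd (cot_act M x) (psc t (cot_act M v))"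
  unfolding cot_act_def padd_def psc_def
  by (simp del: transpose_matrix_vector add: vec_eq_iff matrix_vector_mult_def sum.distrib sum_distrib_left algebra_simps)

lemma dd_cot: "dd (f \<circ> cot_act M) x v = dd f (cot_act M x) (cot_act M v)"
  unfolding dd_def by (simp add: cot_lin)

definition psumsc :: "'a set \<Rightarrow> ('a \<Rightarrow> complex) \<Rightarrow> ('a \<Rightarrow> 'n::finite pt) \<Rightarrow> 'n pt" where
  "psumsc A c e = ((\<Sum>g\<in>A. c g *s fst (e g)), (\<Sum>g\<in>A. c g *s snd (e g)))"

lemma mv_sum: "(M::complex^'n::finite^'n) *v (\<Sum>g\<in>A. c g *s a g) = (\<Sum>g\<in>A. c g *s (M *v a g))"
proof -
  have "(M *v (\<Sum>g\<in>A. c g *s a g)) $ i = (\<Sum>g\<in>A. c g *s (M *v a g)) $ i" for i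
  proof -
    have "(M *v (\<Sum>g\<in>A. c g *s a g)) $ i = (\<Sum>k\<in>UNIV. \<Sum>g\<in>A. M$i$k * (c g * a g $ k))"
      by (simp add: matrix_vector_mult_def sum_distrib_left)
    also have "\<dots> = (\<Sum>g\<in>A. \<Sum>k\<in>UNIV. M$i$k * (c g * a g $ k))" by (rule sum.swap)
    also have "\<dots> = (\<Sum>g\<in>A. c g *s (M *v a g)) $ i"
      by (simp add: matrix_vector_mult_def sum_distrib_left mult_ac)
    finally show ?thesis .
  qed
  then show ?thesis by (simp add: vec_eq_iff)
qed

lemma cot_psumsc: "cot_act M (psumsc A c e) = psumsc A c (\<lambda>g. cot_act M (e g))"
  unfolding cot_act_def psumsc_def by (simp del: transpose_matrix_vector add: mv_sum)

lemma Om_psumsc: "Om a (psumsc A c e) = (\<Sum>g\<in>A. c g * Om a (e g))"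
proof -
  have "Om a (psumsc A c e) = (\<Sum>i\<in>UNIV. \<Sum>g\<in>A. c g * (fst a $ i * snd (e g) $ i - snd a $ i * fst (e g) $ i))"
    unfolding Om_def psumsc_def by (simp add: sum_distrib_left sum_subtractf[symmetric] algebra_simps)
  also have "\<dots> = (\<Sum>g\<in>A. \<Sum>i\<in>UNIV. c g * (fst a $ i * snd (e g) $ i - snd a $ i * fst (e g) $ i))"
    by (rule sum.swap)
  also have "\<dots> = (\<Sum>g\<in>A. c g * Om a (e g))"
    unfolding Om_def by (simp add: sum_distrib_left)
  finally show ?thesis .
qed

lemma polymap_psumsc: "finite A \<Longrightarrow> (\<And>g. g \<in> A \<Longrightarrow> c g \<in> polyfun) \<Longrightarrow> polymap (\<lambda>x. psumsc A (\<lambda>g. c g x) e)"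
  unfolding polymap_def psumsc_def by (auto intro!: pf_sum pf_mult)



lemma zero_der: "(\<lambda>f x. 0) \<in> derivs polyfun" unfolding derivs_def using pf_const[of 0] by simp

lemma Om_e1: fixes a :: "'n::finite pt" shows "Om a (0, \<chi> k. if k = j then 1 else 0) = fst a $ j"
proof -
  have "(\<lambda>i. fst a $ i * snd (0::complex^'n, \<chi> k. if k = j then 1 else 0) $ i - snd a $ i * fst (0::complex^'n, \<chi> k. if k = j then (1::complex) else 0) $ i)
     = (\<lambda>i. if i = j then fst a $ j else 0)" (is "?l = ?r") by (auto simp: fun_eq_iff)
  have "Om a (0, \<chi> k. if k = j then 1 else 0) = sum ?l UNIV" unfolding Om_def ..
  also have "\<dots> = sum ?r UNIV" unfolding \<open>?l = ?r\<close> ..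
  finally show ?thesis by simp
qed
lemma Om_e2: fixes a :: "'n::finite pt" shows "Om a ((\<chi> k. if k = j then 1 else 0), 0) = - snd a $ j"
proof -
  have "(\<lambda>i. fst a $ i * snd (\<chi> k. if k = j then (1::complex) else 0, 0::complex^'n) $ i - snd a $ i * fst (\<chi> k. if k = j then (1::complex) else 0, 0::complex^'n) $ i)
     = (\<lambda>i. if i = j then - snd a $ j else 0)" (is "?l = ?r") by (auto simp: fun_eq_iff)
  have "Om a ((\<chi> k. if k = j then 1 else 0), 0) = sum ?l UNIV" unfolding Om_def ..
  also have "\<dots> = sum ?r UNIV" unfolding \<open>?l = ?r\<close> ..
  finally show ?thesis by simp
qed

lemma W_omega0:
  assumes W: "W \<in> derivs polyfun" and A: "A \<in> derivs polyfun" and B: "B \<in> derivs polyfun"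
  shows "W (omega0 A B) x = (\<Sum>i\<in>UNIV. W (A (qc i)) x * B (pc i) x + A (qc i) x * W (B (pc i)) x
        - W (A (pc i)) x * B (qc i) x - A (pc i) x * W (B (qc i)) x)"
proof -
  have inA: "A (qc i) \<in> polyfun" "A (pc i) \<in> polyfun" for i using d_in[OF subalg_polyfun A] by auto
  have inB: "B (qc i) \<in> polyfun" "B (pc i) \<in> polyfun" for i using d_in[OF subalg_polyfun B] by auto
  have e: "omega0 A B = (\<lambda>x. \<Sum>i\<in>UNIV. (\<lambda>i x. A (qc i) x * B (pc i) x - A (pc i) x * B (qc i) x) i x)"
    unfolding omega0_def by simp
  have "W (omega0 A B) = (\<lambda>x. \<Sum>i\<in>UNIV. W (\<lambda>x. A (qc i) x * B (pc i) x - A (pc i) x * B (qc i) x) x)"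
    unfolding e using inA inB by (subst d_sum[OF subalg_polyfun W]) (auto intro!: pf_diff pf_mult)
  also have "\<dots> = (\<lambda>x. \<Sum>i\<in>UNIV. W (A (qc i)) x * B (pc i) x + A (qc i) x * W (B (pc i)) x
        - W (A (pc i)) x * B (qc i) x - A (pc i) x * W (B (qc i)) x)"
    using inA inB by (simp add: d_diff[OF subalg_polyfun W] d_mult[OF subalg_polyfun W] pf_mult algebra_simps)
  finally show ?thesis by simp
qed

lemma domega0:
  assumes W0: "W0 \<in> derivs polyfun" and W1: "W1 \<in> derivs polyfun" and W2: "W2 \<in> derivs polyfun"
  shows "W0 (omega0 W1 W2) x - W1 (omega0 W0 W2) x + W2 (omega0 W0 W1) x
     - omega0 (der_bracket W0 W1) W2 x + omega0 (der_bracket W0 W2) W1 x - omega0 (der_bracket W1 W2) W0 x = 0"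
proof -
  let ?a = "\<lambda>W i. W (qc i) x" and ?b = "\<lambda>W i. W (pc i) x"
  let ?s = "\<lambda>U W i. U (W (qc i)) x" and ?t = "\<lambda>U W i. U (W (pc i)) x"
  have "W0 (omega0 W1 W2) x - W1 (omega0 W0 W2) x + W2 (omega0 W0 W1) x
     - omega0 (der_bracket W0 W1) W2 x + omega0 (der_bracket W0 W2) W1 x - omega0 (der_bracket W1 W2) W0 x
     = (\<Sum>i\<in>UNIV.
         (?s W0 W1 i * ?b W2 i + ?a W1 i * ?t W0 W2 i - ?t W0 W1 i * ?a W2 i - ?b W1 i * ?s W0 W2 i)
       - (?s W1 W0 i * ?b W2 i + ?a W0 i * ?t W1 W2 i - ?t W1 W0 i * ?a W2 i - ?b W0 i * ?s W1 W2 i)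
       + (?s W2 W0 i * ?b W1 i + ?a W0 i * ?t W2 W1 i - ?t W2 W0 i * ?a W1 i - ?b W0 i * ?s W2 W1 i)
       - ((?s W0 W1 i - ?s W1 W0 i) * ?b W2 i - (?t W0 W1 i - ?t W1 W0 i) * ?a W2 i)
       + ((?s W0 W2 i - ?s W2 W0 i) * ?b W1 i - (?t W0 W2 i - ?t W2 W0 i) * ?a W1 i)
       - ((?s W1 W2 i - ?s W2 W1 i) * ?b W0 i - (?t W1 W2 i - ?t W2 W1 i) * ?a W0 i))"
    unfolding W_omega0[OF W0 W1 W2] W_omega0[OF W1 W0 W2] W_omega0[OF W2 W0 W1]
    unfolding omega0_def der_bracket_def
    by (simp add: sum_subtractf[symmetric] sum.distrib[symmetric] algebra_simps)
  also have "\<dots> = 0" by (simp add: algebra_simps)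
  finally show ?thesis .
qed

lemma bracket_der:
  assumes S: "subalg S" and A: "A \<in> derivs S" and B: "B \<in> derivs S"
  shows "der_bracket A B \<in> derivs S"
proof -
  note dA = d_in[OF S A] d_add[OF S A] d_cmul[OF S A] d_mult[OF S A] d_out[OF S A] d_const[OF S A]
  note dB = d_in[OF S B] d_add[OF S B] d_cmul[OF S B] d_mult[OF S B] d_out[OF S B] d_const[OF S B]
  have 1: "\<forall>f\<in>S. der_bracket A B f \<in> S"
    unfolding der_bracket_def using dA(1) dB(1) by (auto intro!: sa_diff[OF S])
  have 2: "der_bracket A B (\<lambda>x. f x + g x) = (\<lambda>x. der_bracket A B f x + der_bracket A B g x)"
    if f: "f \<in> S" and g: "g \<in> S" for f g
  proof -
    have a: "A (B (\<lambda>x. f x + g x)) = (\<lambda>x. A (B f) x + A (B g) x)"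
      using dB(2)[OF f g] dA(2)[OF dB(1)[OF f] dB(1)[OF g]] by simp
    have b: "B (A (\<lambda>x. f x + g x)) = (\<lambda>x. B (A f) x + B (A g) x)"
      using dA(2)[OF f g] dB(2)[OF dA(1)[OF f] dA(1)[OF g]] by simp
    show ?thesis unfolding der_bracket_def a b by (simp add: fun_eq_iff algebra_simps)
  qed
  have 3: "der_bracket A B (\<lambda>x. c * f x) = (\<lambda>x. c * der_bracket A B f x)"
    if f: "f \<in> S" for f c
  proof -
    have a: "A (B (\<lambda>x. c * f x)) = (\<lambda>x. c * A (B f) x)"
      using dB(3)[OF f] dA(3)[OF dB(1)[OF f]] by simp
    have b: "B (A (\<lambda>x. c * f x)) = (\<lambda>x. c * B (A f) x)"
      using dA(3)[OF f] dB(3)[OF dA(1)[OF f]] by simp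
    show ?thesis unfolding der_bracket_def a b by (simp add: fun_eq_iff algebra_simps)
  qed
  have 4: "der_bracket A B (\<lambda>x. f x * g x) = (\<lambda>x. f x * der_bracket A B g x + der_bracket A B f x * g x)"
    if f: "f \<in> S" and g: "g \<in> S" for f g
  proof -
    have "A (B (\<lambda>x. f x * g x)) = A (\<lambda>x. f x * B g x + B f x * g x)" using dB(4) f g by simp
    also have "\<dots> = (\<lambda>x. (f x * A (B g) x + A f x * B g x) + (B f x * A g x + A (B f) x * g x))"
      using f g dA(1,2,4) dB(1) sa_mult[OF S] by simp
    finally have a: "A (B (\<lambda>x. f x * g x)) = \<dots>" .
    have "B (A (\<lambda>x. f x * g x)) = B (\<lambda>x. f x * A g x + A f x * g x)" using dA(4) f g by simp
    also have "\<dots> = (\<lambda>x. (f x * B (A g) x + B f x * A g x) + (A f x * B g x + B (A f) x * g x))"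
      using f g dB(1,2,4) dA(1) sa_mult[OF S] by simp
    finally have b: "B (A (\<lambda>x. f x * g x)) = \<dots>" .
    show ?thesis unfolding der_bracket_def a b by (simp add: fun_eq_iff algebra_simps)
  qed
  have 5: "\<forall>f. f \<notin> S \<longrightarrow> der_bracket A B f = (\<lambda>x. 0)"
    unfolding der_bracket_def using dA(5,6) dB(5,6) by simp
  show ?thesis unfolding derivs_def using 1 2 3 4 5 by blast
qed

context setting begin

definition xi :: "('n pt \<Rightarrow> complex) \<Rightarrow> 'n pt \<Rightarrow> 'n pt \<Rightarrow> 'n pt" where
  "xi u e x = psumsc (carrier G) (\<lambda>g. u (gam g x)) (\<lambda>g. gam (inv g) e)"

lemma xi_poly: "u \<in> polyfun \<Longrightarrow> polymap (xi u e)"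
  unfolding xi_def using polymap_psumsc[of "carrier G" "\<lambda>g x. u (gam g x)"] fin pf_gam by auto

lemma psumsc_reindex: "k \<in> carrier G \<Longrightarrow> psumsc (carrier G) c e = psumsc (carrier G) (\<lambda>g. c (g \<otimes> k)) (\<lambda>g. e (g \<otimes> k))"
  unfolding psumsc_def
  using sum.reindex_bij_betw[OF bij_rmult, of k "\<lambda>g. c g *s fst (e g)"]
    sum.reindex_bij_betw[OF bij_rmult, of k "\<lambda>g. c g *s snd (e g)"] by simp

lemma xi_equiv: assumes h: "h \<in> carrier G" shows "xi u e (gam h x) = gam h (xi u e x)"
proof -
  have "xi u e (gam h x) = psumsc (carrier G) (\<lambda>g. u (gam (g \<otimes> inv h) (gam h x))) (\<lambda>g. gam (inv (g \<otimes> inv h)) e)"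
    unfolding xi_def using psumsc_reindex[of "inv h"] h by simp
  also have "\<dots> = psumsc (carrier G) (\<lambda>g. u (gam g x)) (\<lambda>g. gam h (gam (inv g) e))"
    unfolding psumsc_def
    by (intro arg_cong2[where f=Pair] sum.cong refl)
       (use h in \<open>simp_all add: gam_mul gam_inv2 inv_mult_group\<close>)
  also have "\<dots> = gam h (xi u e x)"
    unfolding xi_def gam_def cot_psumsc ..
  finally show ?thesis .
qed

lemma Zv_inv: assumes u: "u \<in> polyfun" shows "Zv (xi u e) \<in> inv_derivs G \<rho>"
  unfolding invd_iff
proof (intro conjI ballI)
  show "Zv (xi u e) \<in> derivs polyfun" by (rule Zv_der[OF xi_poly[OF u]])
  fix g and f :: "'n pt \<Rightarrow> complex" assume g: "g \<in> carrier G" and f: "f \<in> polyfun"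
  have fg: "f \<circ> gam g \<in> polyfun" using pf_cot f unfolding gam_def by auto
  show "Zv (xi u e) (f \<circ> gam g) = Zv (xi u e) f \<circ> gam g"
    unfolding Zv_def using f fg
    by (simp add: fun_eq_iff gam_def dd_cot xi_equiv[OF g, unfolded gam_def])
qed

lemma nondeg_core:
  assumes W: "W \<in> inv_derivs G \<rho>"
    and H: "\<And>u e x. u \<in> polyfun \<Longrightarrow> Om (wvec W x) (xi u e x) = 0"
  shows "f \<in> polyfun \<Longrightarrow> W f = (\<lambda>x. 0)"
proof -
  have Weq: "\<And>f. f \<in> polyfun \<Longrightarrow> W (f \<circ> cot_act (\<rho> g)) = W f \<circ> cot_act (\<rho> g)" if "g \<in> carrier G" for g
    using W that unfolding invd_iff gam_def by auto
  have Om0: "Om (wvec W x) e = 0" for x e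
  proof -
    let ?F = "(\<lambda>g. gam g x) ` carrier G - {x}"
    obtain v where v: "v \<in> polyfun" "v x = 1" "\<forall>y\<in>?F. v y = 0"
      using exists_bump[of ?F x] fin by auto
    let ?N = "of_nat (card {g\<in>carrier G. gam g x = x}) :: complex"
    have "0 = Om (wvec W x) (xi v e x)" using H[OF v(1)] by simp
    also have "\<dots> = (\<Sum>g\<in>carrier G. v (gam g x) * Om (wvec W x) (gam (inv g) e))"
      unfolding xi_def Om_psumsc ..
    also have "\<dots> = (\<Sum>g\<in>carrier G. v (gam g x) * (\<lambda>y. Om (wvec W y) e) (gam g x))"
    proof (intro sum.cong refl)
      fix g assume g: "g \<in> carrier G"
      have "Om (wvec W x) (gam (inv g) e) = Om (gam g (wvec W x)) (gam g (gam (inv g) e))"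
        unfolding gam_def using Om_inv[OF rinv'[OF g]] by simp
      also have "\<dots> = Om (wvec W (gam g x)) e"
        using wvec_equiv[OF invd_der[OF W] Weq[OF g]] gam_inv1[OF g] unfolding gam_def by simp
      finally show "v (gam g x) * Om (wvec W x) (gam (inv g) e) = v (gam g x) * (\<lambda>y. Om (wvec W y) e) (gam g x)"
        by simp
    qed
    also have "\<dots> = ?N * Om (wvec W x) e" by (rule stab_sum[OF v(2) v(3)])
    finally show ?thesis using stab_card by simp
  qed
  have q: "W (qc j) = (\<lambda>x. 0)" for j
  proof
    fix x show "W (qc j) x = 0" using Om0[of x "(0, \<chi> k. if k = j then 1 else 0)"] unfolding Om_e1 wvec_def by simp
  qed
  have p: "W (pc j) = (\<lambda>x. 0)" for j
  proof
    fix x show "W (pc j) x = 0" using Om0[of x "((\<chi> k. if k = j then 1 else 0), 0)"] unfolding Om_e2 wvec_def by simp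
  qed
  have "W = (\<lambda>f x. 0)" by (rule derivs_coord_eq[OF invd_der[OF W] zero_der]) (use q p in auto)
  then show "f \<in> polyfun \<Longrightarrow> W f = (\<lambda>x. 0)" by simp
qed

lemma bracket_inv:
  assumes A: "A \<in> inv_derivs G \<rho>" and B: "B \<in> inv_derivs G \<rho>"
  shows "der_bracket A B \<in> inv_derivs G \<rho>"
  unfolding invd_iff
proof (intro conjI ballI)
  show "der_bracket A B \<in> derivs polyfun" by (rule bracket_der[OF subalg_polyfun invd_der[OF A] invd_der[OF B]])
  fix g and f :: "'n pt \<Rightarrow> complex" assume g: "g \<in> carrier G" and f: "f \<in> polyfun"
  have Ai: "A (h \<circ> gam g) = A h \<circ> gam g" if "h \<in> polyfun" for h using A g that unfolding invd_iff by auto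
  have Bi: "B (h \<circ> gam g) = B h \<circ> gam g" if "h \<in> polyfun" for h using B g that unfolding invd_iff by auto
  have "A (B (f \<circ> gam g)) = A (B f) \<circ> gam g" using Ai Bi f d_in[OF subalg_polyfun invd_der[OF B]] by simp
  moreover have "B (A (f \<circ> gam g)) = B (A f) \<circ> gam g" using Ai Bi f d_in[OF subalg_polyfun invd_der[OF A]] by simp
  ultimately show "der_bracket A B (f \<circ> gam g) = der_bracket A B f \<circ> gam g"
    unfolding der_bracket_def by (simp add: o_def)
qed

end


lemma om_add: "omega0 (der_add A B) C = (\<lambda>x. omega0 A C x + omega0 B C x)"
  unfolding omega0_def der_add_def by (simp add: fun_eq_iff sum.distrib[symmetric] algebra_simps)
lemma om_smult: "omega0 (der_smult a A) C = (\<lambda>x. a x * omega0 A C x)"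
  unfolding omega0_def der_smult_def by (simp add: fun_eq_iff sum_distrib_left algebra_simps)
lemma om_self: "omega0 A A = (\<lambda>x. 0)"
  unfolding omega0_def by (simp add: mult.commute)

locale setting2 = setting G \<rho> for G :: "('g, 'b) monoid_scheme" (structure) and \<rho> :: "'g \<Rightarrow> complex^'n::finite^'n" +
  fixes lam :: "(('n pt \<Rightarrow> complex) \<Rightarrow> ('n pt \<Rightarrow> complex)) \<Rightarrow> (('n pt \<Rightarrow> complex) \<Rightarrow> ('n pt \<Rightarrow> complex))"
  assumes l1: "\<forall>X\<in>derivs (invariants G \<rho>). lam X \<in> inv_derivs G \<rho>"
    and l4: "\<forall>X\<in>derivs (invariants G \<rho>). \<forall>f\<in>invariants G \<rho>. lam X f = X f"
begin

lemma lamI: "X \<in> derivs RG \<Longrightarrow> lam X \<in> inv_derivs G \<rho>" using l1 by auto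
lemma lamE: "X \<in> derivs RG \<Longrightarrow> f \<in> RG \<Longrightarrow> lam X f = X f" using l4 by auto

lemma om_RG:
  assumes W1: "W1 \<in> inv_derivs G \<rho>" and W2: "W2 \<in> inv_derivs G \<rho>"
  shows "omega0 W1 W2 \<in> RG"
  unfolding inv_iff
proof (intro conjI ballI allI)
  have d1: "W1 f \<in> polyfun" "W2 f \<in> polyfun" if "f \<in> polyfun" for f
    using d_in[OF subalg_polyfun invd_der[OF W1]] d_in[OF subalg_polyfun invd_der[OF W2]] that by auto
  show "omega0 W1 W2 \<in> polyfun" unfolding omega0_def
    by (intro pf_sum pf_diff pf_mult d1) auto
  fix g x assume g: "g \<in> carrier G"
  have Weq: "\<And>f. f \<in> polyfun \<Longrightarrow> W (f \<circ> cot_act (\<rho> g)) = W f \<circ> cot_act (\<rho> g)" if "W \<in> inv_derivs G \<rho>" for W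
    using that g unfolding invd_iff gam_def by auto
  have "omega0 W1 W2 (gam g x) = Om (cot_act (\<rho> g) (wvec W1 x)) (cot_act (\<rho> g) (wvec W2 x))"
    unfolding omega0_Om gam_def
    using wvec_equiv[OF invd_der[OF W1] Weq[OF W1]] wvec_equiv[OF invd_der[OF W2] Weq[OF W2]] by simp
  also have "\<dots> = omega0 W1 W2 x" unfolding omega0_Om by (rule Om_inv[OF rinv'[OF g]])
  finally show "omega0 W1 W2 (gam g x) = omega0 W1 W2 x" .
qed

definition restr :: "(('n pt \<Rightarrow> complex) \<Rightarrow> ('n pt \<Rightarrow> complex)) \<Rightarrow> (('n pt \<Rightarrow> complex) \<Rightarrow> ('n pt \<Rightarrow> complex))" where
  "restr Z = (\<lambda>f. if f \<in> RG then Z f else (\<lambda>x. 0))"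

lemma restr_der: assumes Z: "Z \<in> inv_derivs G \<rho>" shows "restr Z \<in> derivs RG"
proof -
  have Zd: "Z \<in> derivs polyfun" using invd_der[OF Z] .
  have inRG: "Z f \<in> RG" if f: "f \<in> RG" for f
    unfolding inv_iff
  proof (intro conjI ballI allI)
    show "Z f \<in> polyfun" using d_in[OF subalg_polyfun Zd] RG_poly[OF f] by auto
    fix g x assume g: "g \<in> carrier G"
    have "f \<circ> gam g = f" using f g unfolding inv_iff by (auto simp: fun_eq_iff)
    then show "Z f (gam g x) = Z f x" using invd_gam[OF Z g RG_poly[OF f]] by simp
  qed
  note S = subalg_RG
  show ?thesis unfolding derivs_def restr_def
    using inRG RG_poly d_add[OF subalg_polyfun Zd] d_cmul[OF subalg_polyfun Zd] d_mult[OF subalg_polyfun Zd]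
      sa_add[OF S] sa_cmul[OF S] sa_mult[OF S]
    by auto
qed

lemma lam_restr: assumes Z: "Z \<in> inv_derivs G \<rho>" shows "lam (restr Z) = Z"
proof (rule inv_derivs_eq[OF lamI[OF restr_der[OF Z]] Z])
  fix f assume f: "f \<in> RG"
  have "lam (restr Z) f = restr Z f" by (rule lamE[OF restr_der[OF Z] f])
  also have "\<dots> = Z f" using f by (simp add: restr_def)
  finally show "lam (restr Z) f = Z f" .
qed

lemma lam_bracket:
  assumes X0: "X0 \<in> derivs RG" and X1: "X1 \<in> derivs RG"
  shows "lam (der_bracket X0 X1) = der_bracket (lam X0) (lam X1)"
proof (rule inv_derivs_eq)
  have B: "der_bracket X0 X1 \<in> derivs RG" by (rule bracket_der[OF subalg_RG X0 X1])
  show "lam (der_bracket X0 X1) \<in> inv_derivs G \<rho>" by (rule lamI[OF B])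
  show "der_bracket (lam X0) (lam X1) \<in> inv_derivs G \<rho>" by (rule bracket_inv[OF lamI[OF X0] lamI[OF X1]])
  fix f assume f: "f \<in> RG"
  have "X1 f \<in> RG" "X0 f \<in> RG" using d_in[OF subalg_RG X1 f] d_in[OF subalg_RG X0 f] by auto
  then have "der_bracket X0 X1 f = der_bracket (lam X0) (lam X1) f"
    unfolding der_bracket_def using lamE[OF X0] lamE[OF X1] f by simp
  then show "lam (der_bracket X0 X1) f = der_bracket (lam X0) (lam X1) f"
    using lamE[OF B f] by simp
qed

end


theorem mainTheorem7:
  fixes G :: "('g, 'b) monoid_scheme"
    and \<rho> :: "'g \<Rightarrow> complex^'n::finite^'n"
    and lam :: "(('n pt \<Rightarrow> complex) \<Rightarrow> ('n pt \<Rightarrow> complex)) \<Rightarrow> (('n pt \<Rightarrow> complex) \<Rightarrow> ('n pt \<Rightarrow> complex))"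
  assumes "group G" and "finite (carrier G)"
    and "\<forall>g\<in>carrier G. invertible (\<rho> g)"
    and "\<forall>g\<in>carrier G. \<forall>h\<in>carrier G. \<rho> (g \<otimes>\<^bsub>G\<^esub> h) = \<rho> g ** \<rho> h"
    and "\<forall>X\<in>derivs (invariants G \<rho>). lam X \<in> inv_derivs G \<rho>"
    and "\<forall>X\<in>derivs (invariants G \<rho>). \<forall>Y\<in>derivs (invariants G \<rho>).
           lam (der_add X Y) = der_add (lam X) (lam Y)"
    and "\<forall>a\<in>invariants G \<rho>. \<forall>X\<in>derivs (invariants G \<rho>).
           lam (der_smult a X) = der_smult a (lam X)"
    and "\<forall>X\<in>derivs (invariants G \<rho>). \<forall>f\<in>invariants G \<rho>. lam X f = X f"
  shows "let R\<Gamma> = invariants G \<rho>; D = derivs R\<Gamma>; \<omega> = (\<lambda>X Y. omega0 (lam X) (lam Y)) in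
           (\<forall>X\<in>D. \<forall>Y\<in>D. \<omega> X Y \<in> R\<Gamma>)
         \<and> (\<forall>X\<in>D. \<forall>Y\<in>D. \<forall>Z\<in>D. \<omega> (der_add X Y) Z = (\<lambda>x. \<omega> X Z x + \<omega> Y Z x))
         \<and> (\<forall>a\<in>R\<Gamma>. \<forall>X\<in>D. \<forall>Y\<in>D. \<omega> (der_smult a X) Y = (\<lambda>x. a x * \<omega> X Y x))
         \<and> (\<forall>X\<in>D. \<omega> X X = (\<lambda>x. 0))
         \<and> (\<forall>X0\<in>D. \<forall>X1\<in>D. \<forall>X2\<in>D. d2 \<omega> X0 X1 X2 = (\<lambda>x. 0))
         \<and> (\<forall>X\<in>D. (\<forall>Y\<in>D. \<omega> X Y = (\<lambda>x. 0)) \<longrightarrow> X = (\<lambda>f x. 0))"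
proof -
  have s: "setting2 G \<rho> lam"
    unfolding setting2_def setting2_axioms_def setting_def setting_axioms_def
    by (intro conjI) (fact assms)+
  interpret setting2 G \<rho> lam by (rule s)
  have ladd: "lam (der_add X Y) = der_add (lam X) (lam Y)" if "X \<in> derivs RG" "Y \<in> derivs RG" for X Y
    using assms(6) that by auto
  have lsm: "lam (der_smult a X) = der_smult a (lam X)" if "a \<in> RG" "X \<in> derivs RG" for a X
    using assms(7) that by auto
  have P1: "\<forall>X\<in>derivs RG. \<forall>Y\<in>derivs RG. omega0 (lam X) (lam Y) \<in> RG"
    using om_RG lamI by auto
  have P2: "\<forall>X\<in>derivs RG. \<forall>Y\<in>derivs RG. \<forall>Z\<in>derivs RG.
      omega0 (lam (der_add X Y)) (lam Z) = (\<lambda>x. omega0 (lam X) (lam Z) x + omega0 (lam Y) (lam Z) x)"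
  proof (intro ballI)
    fix X Y Z assume "X \<in> derivs RG" "Y \<in> derivs RG" "Z \<in> derivs RG"
    show "omega0 (lam (der_add X Y)) (lam Z) = (\<lambda>x. omega0 (lam X) (lam Z) x + omega0 (lam Y) (lam Z) x)"
      unfolding ladd[OF \<open>X \<in> derivs RG\<close> \<open>Y \<in> derivs RG\<close>] by (rule om_add)
  qed
  have P3: "\<forall>a\<in>RG. \<forall>X\<in>derivs RG. \<forall>Y\<in>derivs RG.
      omega0 (lam (der_smult a X)) (lam Y) = (\<lambda>x. a x * omega0 (lam X) (lam Y) x)"
  proof (intro ballI)
    fix a X Y assume "a \<in> RG" "X \<in> derivs RG" "Y \<in> derivs RG"
    show "omega0 (lam (der_smult a X)) (lam Y) = (\<lambda>x. a x * omega0 (lam X) (lam Y) x)"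
      unfolding lsm[OF \<open>a \<in> RG\<close> \<open>X \<in> derivs RG\<close>] by (rule om_smult)
  qed
  have P4: "\<forall>X\<in>derivs RG. omega0 (lam X) (lam X) = (\<lambda>x. 0)" by (intro ballI, rule om_self)
  have P5: "d2 (\<lambda>X Y. omega0 (lam X) (lam Y)) X0 X1 X2 = (\<lambda>x. 0)"
    if X: "X0 \<in> derivs RG" "X1 \<in> derivs RG" "X2 \<in> derivs RG" for X0 X1 X2
  proof -
    have W: "lam X0 \<in> derivs polyfun" "lam X1 \<in> derivs polyfun" "lam X2 \<in> derivs polyfun"
      using invd_der lamI X by auto
    have e0: "X0 (omega0 (lam X1) (lam X2)) = lam X0 (omega0 (lam X1) (lam X2))"
      using lamE[OF X(1)] P1 X by auto
    have e1: "X1 (omega0 (lam X0) (lam X2)) = lam X1 (omega0 (lam X0) (lam X2))"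
      using lamE[OF X(2)] P1 X by auto
    have e2: "X2 (omega0 (lam X0) (lam X1)) = lam X2 (omega0 (lam X0) (lam X1))"
      using lamE[OF X(3)] P1 X by auto
    show ?thesis unfolding d2_def e0 e1 e2 lam_bracket[OF X(1) X(2)] lam_bracket[OF X(1) X(3)] lam_bracket[OF X(2) X(3)]
      using domega0[OF W] by simp
  qed
  have P6: "X = (\<lambda>f x. 0)" if X: "X \<in> derivs RG" and H: "\<forall>Y\<in>derivs RG. omega0 (lam X) (lam Y) = (\<lambda>x. 0)" for X
  proof
    fix f
    show "X f = (\<lambda>x. 0)"
    proof (cases "f \<in> RG")
      case False then show ?thesis using d_out[OF subalg_RG X] by simp
    next
      case True
      have "lam X f = (\<lambda>x. 0)"
      proof (rule nondeg_core[OF lamI[OF X]])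
        fix u :: "'n pt \<Rightarrow> complex" and e x assume u: "u \<in> polyfun"
        have Y: "restr (Zv (xi u e)) \<in> derivs RG" by (rule restr_der[OF Zv_inv[OF u]])
        have "omega0 (lam X) (lam (restr (Zv (xi u e)))) = (\<lambda>x. 0)"
          using H Y by blast
        then have "omega0 (lam X) (Zv (xi u e)) = (\<lambda>x. 0)"
          unfolding lam_restr[OF Zv_inv[OF u]] .
        then have "omega0 (lam X) (Zv (xi u e)) x = 0" by simp
        then show "Om (wvec (lam X) x) (xi u e x) = 0" unfolding omega0_Om wvec_Zv .
      next
        show "f \<in> polyfun" using True RG_poly by auto
      qed
      then show ?thesis using lamE[OF X True] by simp
    qed
  qed
  show ?thesis unfolding Let_def
  proof (intro conjI)
    show "\<forall>X0\<in>derivs RG. \<forall>X1\<in>derivs RG. \<forall>X2\<in>derivs RG. d2 (\<lambda>X Y. omega0 (lam X) (lam Y)) X0 X1 X2 = (\<lambda>x. 0)"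
      using P5 by blast
    show "\<forall>X\<in>derivs RG. (\<forall>Y\<in>derivs RG. omega0 (lam X) (lam Y) = (\<lambda>x. 0)) \<longrightarrow> X = (\<lambda>f x. 0)"
      using P6 by blast
  qed (fact P1 P2 P3 P4)+
qed

end
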